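(* Let $G$ be a simple, undirected, unweighted, locally finite graph and $i\sim j$ an edge with $d_i\le d_j$. Suppose $\mathrm{Ric}(i,j)\le -2+\delta$ for some $0<\delta<(1+\gamma_{\max}(i,j))^{-1}$. Then $$\frac{|Q_j|}{|\sharp_\Delta|+1}>\delta^{-1}.$$
   Context: For an edge $i\sim j$ with degrees $d_i,d_j$ and neighbour sets $S_1(\cdot)$: $\sharp_\Delta=S_1(i)\cap S_1(j)$; $\sharp_\square^i=\{k\in S_1(i)\setminus (S_1(j)\cup\{j\}) : \exists\, w\in (S_1(k)\cap S_1(j))\setminus (S_1(i)\cup\{i\})\}$, $\sharp_\square^j$ symmetric; $\gamma_{\max}=\max\big\{\max_{k\in\sharp_\square^i}|(S_1(k)\cap S_1(j))\setminus(S_1(i)\cup\{i\})|,\ \max_{w\in\sharp_\square^j}|(S_1(w)\cap S_1(i))\setminus(S_1(j)\cup\{j\})|\big\}$, with the convention $\gamma_{\max}=0$ when $\sharp_\square^i=\emptyset$. $Q_j=S_1(j)\setminus(\{i\}\cup\sharp_\Delta\cup\sharp_\square^j)$. Balanced Forman curvature: $\mathrm{Ric}(i,j)=0$ if $\min\{d_i,d_j\}=1$, otherwise $\mathrm{Ric}(i,j)=\frac{2}{d_i}+\frac{2}{d_j}-2+\frac{2|\sharp_\Delta|}{\max\{d_i,d_j\}}+\frac{|\sharp_\Delta|}{\min\{d_i,d_j\}}+\frac{\gamma_{\max}^{-1}}{\max\{d_i,d_j\}}(|\sharp_\square^i|+|\sharp_\square^j|)$, the last term being $0$ when $\sharp_\square^i=\emptyset$.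 *)

theory Defs
  imports Main "HOL-Library.Extended_Real"
begin

definition simple_graph :: "('a \<Rightarrow> 'a \<Rightarrow> bool) \<Rightarrow> bool" where
  "simple_graph E \<longleftrightarrow> (\<forall>x y. E x y \<longrightarrow> E y x) \<and> (\<forall>x. \<not> E x x)"

definition S1 :: "('a \<Rightarrow> 'a \<Rightarrow> bool) \<Rightarrow> 'a \<Rightarrow> 'a set" where
  "S1 E x = {y. E x y}"

definition locally_finite :: "('a \<Rightarrow> 'a \<Rightarrow> bool) \<Rightarrow> bool" where
  "locally_finite E \<longleftrightarrow> (\<forall>x. finite (S1 E x))"

definition deg :: "('a \<Rightarrow> 'a \<Rightarrow> bool) \<Rightarrow> 'a \<Rightarrow> nat" where
  "deg E x = card (S1 E x)"

definition sharp_tri :: "('a \<Rightarrow> 'a \<Rightarrow> bool) \<Rightarrow> 'a \<Rightarrow> 'a \<Rightarrow> 'a set" where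
  "sharp_tri E i j = S1 E i \<inter> S1 E j"

definition sq_partners :: "('a \<Rightarrow> 'a \<Rightarrow> bool) \<Rightarrow> 'a \<Rightarrow> 'a \<Rightarrow> 'a \<Rightarrow> 'a set" where
  "sq_partners E i j k = (S1 E k \<inter> S1 E j) - (S1 E i \<union> {i})"

text \<open>sharp_sq E i j is \<sharp>_\<square>^i for the edge i~j; \<sharp>_\<square>^j is sharp_sq E j i.\<close>
definition sharp_sq :: "('a \<Rightarrow> 'a \<Rightarrow> bool) \<Rightarrow> 'a \<Rightarrow> 'a \<Rightarrow> 'a set" where
  "sharp_sq E i j = {k \<in> S1 E i - (S1 E j \<union> {j}). sq_partners E i j k \<noteq> {}}"

definition gamma_max :: "('a \<Rightarrow> 'a \<Rightarrow> bool) \<Rightarrow> 'a \<Rightarrow> 'a \<Rightarrow> nat" where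
  "gamma_max E i j =
     (if sharp_sq E i j = {} then 0
      else max (Max ((\<lambda>k. card (sq_partners E i j k)) ` sharp_sq E i j))
               (Max ((\<lambda>w. card (sq_partners E j i w)) ` sharp_sq E j i)))"

definition Q_set :: "('a \<Rightarrow> 'a \<Rightarrow> bool) \<Rightarrow> 'a \<Rightarrow> 'a \<Rightarrow> 'a set" where
  "Q_set E i j = S1 E j - ({i} \<union> sharp_tri E i j \<union> sharp_sq E j i)"

text \<open>Balanced Forman curvature of the edge i~j.\<close>
definition Ric :: "('a \<Rightarrow> 'a \<Rightarrow> bool) \<Rightarrow> 'a \<Rightarrow> 'a \<Rightarrow> real" where
  "Ric E i j =
    (let di = real (deg E i); dj = real (deg E j); t = real (card (sharp_tri E i j))
     in if min di dj = 1 then 0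
        else 2 / di + 2 / dj - 2 + 2 * t / max di dj + t / min di dj
             + (if sharp_sq E i j = {} then 0
                else (inverse (real (gamma_max E i j)) / max di dj)
                     * (real (card (sharp_sq E i j)) + real (card (sharp_sq E j i)))))"

end

theory Submission
  imports Defs
begin

lemma sq_sym:
  assumes "simple_graph E" "sharp_sq E j i \<noteq> {}"
  shows "sharp_sq E i j \<noteq> {}"
proof -
  from assms(2) obtain k where k: "k \<in> sharp_sq E j i" by blast
  then obtain w where w: "w \<in> sq_partners E j i k" unfolding sharp_sq_def by blast
  have sym: "\<And>x y. E x y \<Longrightarrow> E y x" using assms(1) unfolding simple_graph_def by blast
  have "k \<in> sq_partners E i j w"
    using k w sym unfolding sharp_sq_def sq_partners_def S1_def by auto
  hence "w \<in> sharp_sq E i j"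
    using k w unfolding sharp_sq_def sq_partners_def S1_def by auto
  thus ?thesis by blast
qed

theorem mainTheorem7:
  fixes E :: "'a \<Rightarrow> 'a \<Rightarrow> bool" and i j :: 'a and \<delta> :: real
  assumes "simple_graph E"
    and "locally_finite E"
    and "E i j"
    and "deg E i \<le> deg E j"
    and "Ric E i j \<le> -2 + \<delta>"
    and "0 < \<delta>"
    and "\<delta> < inverse (1 + real (gamma_max E i j))"
  shows "real (card (Q_set E i j)) / (real (card (sharp_tri E i j)) + 1) > inverse \<delta>"
proof -
  have sym: "\<And>x y. E x y \<Longrightarrow> E y x" and irr: "\<And>x. \<not> E x x"
    using assms(1) unfolding simple_graph_def by blast+
  have fi: "finite (S1 E i)" and fj: "finite (S1 E j)"
    using assms(2) unfolding locally_finite_def by auto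
  have "j \<in> S1 E i" "i \<in> S1 E j" using assms(3) sym unfolding S1_def by auto
  hence di1: "deg E i \<ge> 1" and dj1: "deg E j \<ge> 1" using fi fj unfolding deg_def
    by (auto simp: Suc_le_eq card_gt_0_iff)
  define g where "g = real (gamma_max E i j)"
  have g0: "g \<ge> 0" unfolding g_def by simp
  have dl1: "\<delta> < 1"
  proof -
    have "inverse (1 + g) \<le> 1" using g0 by (simp add: inverse_le_1_iff)
    thus ?thesis using assms(7) unfolding g_def by linarith
  qed
  define di where "di = real (deg E i)"
  define dj where "dj = real (deg E j)"
  define t where "t = real (card (sharp_tri E i j))"
  define s where "s = real (card (sharp_sq E j i))"
  define q where "q = real (card (Q_set E i j))"
  define X where "X = (if sharp_sq E i j = {} then 0
                else (inverse (real (gamma_max E i j)) / max di dj)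
                     * (real (card (sharp_sq E i j)) + real (card (sharp_sq E j i))))"
  have didj: "di \<le> dj" using assms(4) unfolding di_def dj_def by simp
  have "\<not> min di dj = 1"
  proof
    assume "min di dj = 1"
    hence "Ric E i j = 0" unfolding Ric_def di_def dj_def Let_def by simp
    thus False using assms(5) dl1 by linarith
  qed
  hence di2: "di \<ge> 2" using didj di1 unfolding di_def by (simp add: min_def split: if_splits)
  hence dj2: "dj \<ge> 2" using didj by linarith
  have ric: "Ric E i j = 2/di + 2/dj - 2 + 2*t/dj + t/di + X"
    using \<open>\<not> min di dj = 1\<close> didj unfolding Ric_def Let_def X_def
    by (simp add: di_def[symmetric] dj_def[symmetric] t_def[symmetric] min_def max_def)
  have ineq: "2/di + 2/dj + 2*t/dj + t/di + X \<le> \<delta>" using ric assms(5) by linarith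
  have X0: "X \<ge> 0" unfolding X_def using di2 didj by (simp add: max_def)
  have t0: "t \<ge> 0" and s0: "s \<ge> 0" unfolding t_def s_def by auto
  have sb: "s \<le> g * X * dj"
  proof (cases "sharp_sq E j i = {}")
    case True
    hence "s = 0" unfolding s_def by simp
    thus ?thesis using g0 X0 dj2 by simp
  next
    case False
    hence ne: "sharp_sq E i j \<noteq> {}" using sq_sym[OF assms(1), of j i] by blast
    have fin: "finite (sharp_sq E i j)" using fi unfolding sharp_sq_def by (auto intro: finite_subset)
    obtain k where k: "k \<in> sharp_sq E i j" using ne by blast
    have "finite (sq_partners E i j k)" using fj unfolding sq_partners_def by auto
    moreover have "sq_partners E i j k \<noteq> {}" using k unfolding sharp_sq_def by auto
    ultimately have c1: "card (sq_partners E i j k) \<ge> 1" by (simp add: Suc_le_eq card_gt_0_iff)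
    have "card (sq_partners E i j k) \<le> Max ((\<lambda>k. card (sq_partners E i j k)) ` sharp_sq E i j)"
      using fin k by (intro Max_ge) auto
    hence "gamma_max E i j \<ge> 1" using c1 ne unfolding gamma_max_def by simp
    hence gp: "g \<ge> 1" unfolding g_def by simp
    have "X = (inverse g / dj) * (real (card (sharp_sq E i j)) + s)"
      using ne didj unfolding X_def g_def s_def by (simp add: max_def)
    hence "X \<ge> (inverse g / dj) * s" using gp dj2 by (simp add: divide_simps)
    hence "X * dj \<ge> s / g" using dj2 gp by (simp add: field_simps)
    hence "g * (X * dj) \<ge> s" using gp by (simp add: field_simps)
    thus ?thesis by (simp add: mult.assoc)
  qed
  have qeq: "q = dj - 1 - t - s"
  proof -
    let ?U = "{i} \<union> sharp_tri E i j \<union> sharp_sq E j i"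
    have sub: "?U \<subseteq> S1 E j" using \<open>i \<in> S1 E j\<close>
      unfolding sharp_tri_def sharp_sq_def by auto
    have fU: "finite ?U" using sub fj finite_subset by blast
    have c: "card (Q_set E i j) = card (S1 E j) - card ?U"
      unfolding Q_set_def using card_Diff_subset[OF fU sub] by simp
    have ft: "finite (sharp_tri E i j)" "finite (sharp_sq E j i)"
      using fj unfolding sharp_tri_def sharp_sq_def by (auto intro: finite_subset)
    have d1: "sharp_tri E i j \<inter> sharp_sq E j i = {}"
      unfolding sharp_tri_def sharp_sq_def by auto
    have d2: "i \<notin> sharp_tri E i j \<union> sharp_sq E j i"
      using irr unfolding sharp_tri_def sharp_sq_def S1_def by auto
    have "card ?U = 1 + card (sharp_tri E i j) + card (sharp_sq E j i)"
      using d1 d2 ft card_Un_disjoint[OF ft d1] by (simp add: Un_assoc)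
    moreover have "card ?U \<le> card (S1 E j)" using card_mono[OF fj sub] .
    ultimately show ?thesis using c unfolding q_def dj_def t_def s_def deg_def by simp
  qed
  define A where "A = \<delta> * dj"
  have h1: "dj * (2/di + 2/dj + 2*t/dj + t/di + X) = 2 + 2*t + dj*(2+t)/di + X*dj"
    using di2 dj2 by (simp add: field_simps)
  have h2: "dj*(2+t)/di \<ge> 2 + t"
  proof -
    have "(2+t) * di \<le> (2+t) * dj" using didj t0 by (simp add: mult_left_mono)
    thus ?thesis using di2 by (simp add: field_simps)
  qed
  have "A \<ge> dj * (2/di + 2/dj + 2*t/dj + t/di + X)"
    unfolding A_def using ineq dj2 by (simp add: mult.commute mult_left_mono)
  hence Ab: "A \<ge> 3*t + 4 + X*dj" using h1 h2 by linarith
  have sb2: "s \<le> g * (A - 3*t - 4)"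
  proof -
    have "g * (X*dj) \<le> g * (A - 3*t - 4)" using Ab g0 by (intro mult_left_mono) auto
    thus ?thesis using sb by (simp add: mult.assoc)
  qed
  have pos: "A - t - 1 > 0" using Ab X0 dj2 t0 by (smt (verit) mult_nonneg_nonneg)
  have k1: "1 + t + s \<le> (1 + g) * (A - t - 1)"
  proof -
    have "g * (A - 3*t - 4) \<le> g * (A - t - 1)" using g0 t0 by (intro mult_left_mono) auto
    hence "s \<le> g * (A - t - 1)" using sb2 by linarith
    moreover have "1 + t \<le> A - t - 1" using Ab X0 dj2 t0 by (smt (verit) mult_nonneg_nonneg)
    ultimately show ?thesis by (simp add: algebra_simps)
  qed
  have dg: "\<delta> * (1 + g) < 1"
    using assms(7) g0 unfolding g_def[symmetric] by (simp add: field_simps)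
  have "\<delta> * (1 + t + s) \<le> \<delta> * ((1 + g) * (A - t - 1))"
    using k1 assms(6) by (intro mult_left_mono) auto
  also have "\<dots> = (\<delta> * (1 + g)) * (A - t - 1)" by simp
  also have "\<dots> < A - t - 1" using dg pos by simp
  finally have "\<delta> * (1 + t + s) < A - t - 1" .
  hence key: "q * \<delta> > t + 1" unfolding qeq A_def by (simp add: algebra_simps)
  have "inverse \<delta> < q / (t + 1)"
    using key assms(6) t0 by (simp add: field_simps)
  thus ?thesis unfolding q_def t_def .
qed

end
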